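(* With $\tilde h_n(q)=q^{n(n-1)/2}h_n(q^{-1})$, one has, as formal power series in $s$, $$\sum_{n\ge0}\tilde h_n(q)s^n=\cfrac{1}{1-\cfrac{c_1 s}{1-\cfrac{c_2 s}{1-\cfrac{c_3 s}{1-\cdots}}}},$$ where $c_{2m-1}=\binom{m+1}{2}_q$ and $c_{2m}=q\binom{m+1}{2}_q$ for $m\ge1$; explicitly $$\sum_{n\ge 0}\tilde h_n(q)s^n=\cfrac{1}{1-\cfrac{s}{1-\cfrac{qs}{1-\cfrac{\binom{3}{2}_q s}{1-\cfrac{q\binom{3}{2}_q s}{1-\cfrac{\binom{4}{2}_q s}{1-\cfrac{q\binom{4}{2}_q s}{1-\cdots}}}}}}}.$$
   Context: Gaussian binomial coefficients: for $m\ge k\ge 0$, $\binom{m}{k}_q=\frac{[m]_q!}{[k]_q!\,[m-k]_q!}$ with $[m]_q!=\prod_{i=1}^m\frac{1-q^i}{1-q}$; set $\binom{m}{k}_q=0$ if $k>m$ or $k<0$. Let $W$ be an $n$-dimensional complex vector space with basis $w_1,\dots,w_n$, and $pr_k:W\to W$ the projection with $pr_k(\sum_i c_iw_i)=\sum_{i\ne k}c_iw_i$. The degenerate flag variety $\mathrm{Fl}^a_n$ is the variety of tuples $(V_1,\dots,V_{n-1})$ of subspaces of $W$ with $\dim V_k=k$ and $pr_{k+1}V_k\subset V_{k+1}$ for $k=1,\dots,n-2$. It admits a cellular decomposition into complex affine cells, so its Poincaré polynomial $P(t)$ involves only even powers of $t$; define $h_n(q)=P(q^{1/2})$, a polynomial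 of degree $n(n-1)/2$ with $h_0(q)=h_1(q)=1$. It is known (Cerulli Irelli–Feigin–Reineke) that $$h_n(q)=\sum_{f_1,\dots,f_{n-1}\ge 0} q^{\sum_{k=1}^{n-1}(k-f_k)(1-f_k+f_{k+1})}\prod_{k=1}^{n-1}\binom{1+f_{k-1}}{f_k}_{\!q}\prod_{k=1}^{n-1}\binom{1+f_{k+1}}{f_k}_{\!q},$$ with the convention $f_0=f_n=0$. *)

theory Defs
  imports "HOL-Computational_Algebra.Computational_Algebra"
begin

definition qint :: "nat \<Rightarrow> complex poly" where
  "qint i = (\<Sum>j<i. monom 1 j)"

definition qfact :: "nat \<Rightarrow> complex poly" where
  "qfact m = (\<Prod>i=1..m. qint i)"

text \<open>Gaussian binomial coefficient as a polynomial in q (exact polynomial quotient).\<close>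
definition qbinom :: "nat \<Rightarrow> nat \<Rightarrow> complex poly" where
  "qbinom m k = (if k \<le> m then qfact m div (qfact k * qfact (m - k)) else 0)"

text \<open>Terms with some f_k > n vanish (f_k \<le> 1 + f_{k-1} forces f_k \<le> k), so the box
  f_k \<le> n carries the whole (finite) support of the sum.\<close>
definition fset :: "nat \<Rightarrow> (nat \<Rightarrow> nat) set" where
  "fset n = {f. (\<forall>k. (k < 1 \<or> k > n - 1) \<longrightarrow> f k = 0) \<and> (\<forall>k. f k \<le> n)}"

text \<open>h_n(q) evaluated at a nonzero complex number q (Cerulli Irelli--Feigin--Reineke formula).\<close>
definition h :: "nat \<Rightarrow> complex \<Rightarrow> complex" where
  "h n q = (\<Sum>f\<in>fset n.
      q powi (\<Sum>k=1..n-1. (int k - int (f k)) * (1 - int (f k) + int (f (k+1))))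
      * (\<Prod>k=1..n-1. poly (qbinom (1 + f (k-1)) (f k)) q)
      * (\<Prod>k=1..n-1. poly (qbinom (1 + f (k+1)) (f k)) q))"

definition htilde :: "nat \<Rightarrow> complex \<Rightarrow> complex" where
  "htilde n q = q ^ (n * (n - 1) div 2) * h n (inverse q)"

text \<open>c_{2m-1} = binom(m+1,2)_q, c_{2m} = q binom(m+1,2)_q (m \<ge> 1).\<close>
definition cfc :: "nat \<Rightarrow> complex \<Rightarrow> complex" where
  "cfc j q = (if odd j then poly (qbinom ((j + 1) div 2 + 1) 2) q
              else q * poly (qbinom (j div 2 + 1) 2) q)"

fun cf :: "complex \<Rightarrow> nat \<Rightarrow> nat \<Rightarrow> complex fps" where
  "cf q k 0 = 1"
| "cf q k (Suc N) = inverse (1 - fps_const (cfc k q) * fps_X * cf q (Suc k) N)"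

end

theory Submission
  imports Defs
begin


fun T :: "nat \<Rightarrow> complex poly" where
  "T 0 = 0"
| "T (Suc m) = T m + monom 1 m * qint (Suc m)"

lemma qint_Suc: "qint (Suc i) = qint i + monom 1 i"
  by (simp add: qint_def)

lemma poly_qint: "poly (qint i) x = (\<Sum>j<i. x^j)"
  by (simp add: qint_def poly_sum poly_monom)

lemma qint_nz: "i > 0 \<Longrightarrow> qint i \<noteq> 0"
proof
  assume "i > 0" "qint i = 0"
  then have "poly (qint i) 0 = 0" by simp
  moreover have "poly (qint i) 0 = 1" using \<open>i>0\<close>
    by (simp add: poly_qint power_0_left)
  ultimately show False by simp
qed

lemma qfact_Suc: "qfact (Suc m) = qfact m * qint (Suc m)"
  by (simp add: qfact_def)

lemma qfact_0: "qfact 0 = 1" by (simp add: qfact_def)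

lemma qfact_nz: "qfact m \<noteq> 0"
  by (induction m) (auto simp: qfact_0 qfact_Suc qint_nz)

lemma qint_1: "qint 1 = 1" by (simp add: qint_def)
lemma qint_Suc0: "qint (Suc 0) = 1" by (simp add: qint_def)
lemma qint_2: "qint 2 = [:1,1:]"
  by (simp add: qint_def numeral_2_eq_2 monom_Suc monom_0 one_pCons)

lemma qfact_2: "qfact 2 = [:1,1:]"
  using qfact_Suc[of 1] qfact_Suc[of 0] qfact_0 qint_1 qint_2
  by (simp add: numeral_2_eq_2)

lemma monom_x: "(monom 1 m :: complex poly) * [:1,1:] = monom 1 m + monom 1 (Suc m)"
  by (simp add: monom_Suc one_pCons)

lemma T_prod: "T m * [:1,1:] = qint m * qint (Suc m)"
proof (induction m)
  case 0 then show ?case by (simp add: qint_def)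
next
  case (Suc m)
  define x :: "complex poly" where "x = [:1,1:]"
  define Q where "Q = qint (Suc m)"
  define a :: "complex poly" where "a = monom 1 m"
  define b :: "complex poly" where "b = monom 1 (Suc m)"
  have ih: "T m * x = qint m * Q" using Suc by (simp add: x_def Q_def)
  have ax: "a * x = a + b" using monom_x[of m] by (simp add: a_def b_def x_def)
  have Q2: "qint (Suc (Suc m)) = Q + b" by (simp add: qint_Suc Q_def b_def)
  have Q1: "Q = qint m + a" by (simp add: qint_Suc Q_def a_def)
  have "T (Suc m) * x = (T m + a * Q) * x" by (simp add: a_def Q_def)
  also have "\<dots> = T m * x + Q * (a * x)" by (simp only: algebra_simps)
  also have "\<dots> = Q * (qint m + a + b)" unfolding ih ax by (simp only: algebra_simps)
  also have "\<dots> = Q * qint (Suc (Suc m))" using Q1 Q2 by (simp only: algebra_simps)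
  finally show ?case by (simp add: x_def Q_def)
qed

lemma qbinom_0: "qbinom m 0 = 1"
  by (simp add: qbinom_def qfact_0 qfact_nz)
lemma qbinom_self: "qbinom m m = 1"
  by (simp add: qbinom_def qfact_0 qfact_nz)
lemma qbinom_gt: "k > m \<Longrightarrow> qbinom m k = 0"
  by (simp add: qbinom_def)
lemma qbinom_Suc_self: "qbinom (Suc m) m = qint (Suc m)"
  by (simp add: qbinom_def qfact_Suc qint_Suc0 qfact_nz qfact_0 Suc_diff_le)

lemma qfact_SS: "qfact (Suc (Suc m)) = qfact m * qfact 2 * T (Suc m)"
proof -
  have "qfact (Suc (Suc m)) = qfact m * (qint (Suc m) * qint (Suc (Suc m)))"
    by (simp add: qfact_Suc mult.assoc)
  also have "qint (Suc m) * qint (Suc (Suc m)) = T (Suc m) * [:1,1:]"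
    using T_prod[of "Suc m"] by simp
  finally show ?thesis by (metis qfact_2 mult.assoc mult.commute)
qed

lemma qbinom_SS: "qbinom (Suc (Suc m)) m = T (Suc m)"
proof -
  have "Suc (Suc m) - m = 2" by simp
  then show ?thesis unfolding qbinom_def
    by (simp add: qfact_SS qfact_nz mult.assoc)
qed

lemma qbinom_SS2: "qbinom (Suc (Suc m)) 2 = T (Suc m)"
proof -
  have "Suc (Suc m) - 2 = m" by simp
  then show ?thesis unfolding qbinom_def
    by (simp add: qfact_SS qfact_nz mult.assoc mult.commute[of "qfact 2"])
qed



definition w :: "complex \<Rightarrow> nat \<Rightarrow> nat \<Rightarrow> complex" where
  "w x a b = poly (qbinom (1+a) b) x * poly (qbinom (1+b) a) x"

definition dd :: "nat \<Rightarrow> nat \<Rightarrow> int" where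
  "dd a b = int b * (1 + int a - int b) + int a * (1 + int b - int a)"

definition W :: "complex \<Rightarrow> nat \<Rightarrow> nat \<Rightarrow> complex" where
  "W q a b = q powi (int b * (int b - int a)) * w q a b"

lemma qint_recip:
  assumes "q \<noteq> 0" "i \<ge> 1"
  shows "q^(i-1) * poly (qint i) (inverse q) = poly (qint i) q"
proof -
  have "q^(i-1) * poly (qint i) (inverse q) = (\<Sum>j<i. q^(i-1) * inverse q ^ j)"
    by (simp add: poly_qint sum_distrib_left)
  also have "\<dots> = (\<Sum>j<i. q^(i - Suc j))"
  proof (rule sum.cong)
    fix j assume "j \<in> {..<i}"
    then have "j \<le> i - 1" by auto
    then have "i - 1 = (i - 1 - j) + j" by simp
    then have "q^(i-1) = q^(i - 1 - j) * q^j" by (metis power_add)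
    then show "q^(i-1) * inverse q ^ j = q^(i - Suc j)"
      using assms(1) by (simp add: power_inverse field_simps)
  qed simp
  also have "\<dots> = (\<Sum>j<i. q^j)" by (rule sum.nat_diff_reindex)
  finally show ?thesis by (simp add: poly_qint)
qed

lemma poly_T_prod: "poly (T m) y * (1 + y) = poly (qint m) y * poly (qint (Suc m)) y"
proof -
  have "poly (T m * [:1,1:]) y = poly (qint m * qint (Suc m)) y" by (simp only: T_prod)
  then show ?thesis by (simp add: algebra_simps)
qed

lemma T_recip:
  assumes q: "q \<noteq> 0" and m: "m \<ge> 1"
  shows "q^(2*m-2) * poly (T m) (inverse q) = poly (T m) q"
proof (cases "q = -1")
  case True
  have "even (2*m-2)" by simp
  then have "(-1::complex)^(2*m-2) = 1" by (rule neg_one_even_power)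
  then show ?thesis using True by simp
next
  case False
  have a: "q^(m-1) * poly (qint m) (inverse q) = poly (qint m) q" using qint_recip[OF q m] .
  have b: "q^m * poly (qint (Suc m)) (inverse q) = poly (qint (Suc m)) q" using qint_recip[OF q, of "Suc m"] by simp
  have e: "poly (T m) (inverse q) * (1 + inverse q) = poly (qint m) (inverse q) * poly (qint (Suc m)) (inverse q)"
    by (rule poly_T_prod)
  have "q^(2*m-2) * poly (T m) (inverse q) * (1 + q) = q^(m-1) * q^m * (poly (T m) (inverse q) * (1 + inverse q))"
  proof -
    have x: "(m-1) + m = (2*m-2) + 1" using m by simp
    have "q^(m-1) * q^m = q^(2*m-2) * q" by (metis x power_add power_one_right)
    then show ?thesis using q by (simp add: field_simps)
  qed
  also have "\<dots> = (q^(m-1) * poly (qint m) (inverse q)) * (q^m * poly (qint (Suc m)) (inverse q))"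
    unfolding e by (simp only: ac_simps)
  also have "\<dots> = poly (qint m) q * poly (qint (Suc m)) q" unfolding a b ..
  also have "\<dots> = poly (T m) q * (1 + q)" using poly_T_prod[of m q] by simp
  finally show ?thesis using False
    by (metis add_eq_0_iff mult_right_cancel add.commute)
qed

lemma powi_neg_nat: "(q::complex) \<noteq> 0 \<Longrightarrow> q powi (- int n) = inverse (q^n)"
  by (simp add: power_int_minus)

lemma w_recip:
  assumes q: "q \<noteq> 0"
  shows "w (inverse q) a b = q powi (- dd a b) * w q a b"
proof -
  consider "b = Suc a" | "b = a" | "a = Suc b" | "b > Suc a" | "a > Suc b" by linarith
  then show ?thesis
  proof cases
    case 1
    have d: "dd a b = int (2*a)" using 1 by (simp add: dd_def algebra_simps)
    have "q^(2*a) * poly (T (Suc a)) (inverse q) = poly (T (Suc a)) q"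
      using T_recip[OF q, of "Suc a"] by simp
    moreover have "w (inverse q) a b = poly (T (Suc a)) (inverse q)" "w q a b = poly (T (Suc a)) q"
      using 1 by (simp_all add: w_def qbinom_self qbinom_SS del: T.simps)
    moreover have "q powi (- dd a b) = inverse (q^(2*a))" unfolding d by (rule powi_neg_nat[OF q])
    ultimately show ?thesis using q by (simp only:) (simp add: field_simps del: T.simps)
  next
    case 2
    have d: "dd a b = int (2*a)" using 2 by (simp add: dd_def algebra_simps)
    have "q^a * poly (qint (Suc a)) (inverse q) = poly (qint (Suc a)) q"
      using qint_recip[OF q, of "Suc a"] by simp
    then have "q^(2*a) * (poly (qint (Suc a)) (inverse q))^2 = (poly (qint (Suc a)) q)^2"
      by (metis power_mult_distrib power_mult mult.commute)
    moreover have "w (inverse q) a b = (poly (qint (Suc a)) (inverse q))^2" "w q a b = (poly (qint (Suc a)) q)^2"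
      using 2 by (simp_all add: w_def qbinom_Suc_self power2_eq_square del: T.simps)
    moreover have "q powi (- dd a b) = inverse (q^(2*a))" unfolding d by (rule powi_neg_nat[OF q])
    ultimately show ?thesis using q by (simp only:) (simp add: field_simps del: T.simps)
  next
    case 3
    have d: "dd a b = int (2*b)" using 3 by (simp add: dd_def algebra_simps)
    have "q^(2*b) * poly (T (Suc b)) (inverse q) = poly (T (Suc b)) q"
      using T_recip[OF q, of "Suc b"] by simp
    moreover have "w (inverse q) a b = poly (T (Suc b)) (inverse q)" "w q a b = poly (T (Suc b)) q"
      using 3 by (simp_all add: w_def qbinom_self qbinom_SS del: T.simps)
    moreover have "q powi (- dd a b) = inverse (q^(2*b))" unfolding d by (rule powi_neg_nat[OF q])
    ultimately show ?thesis using q by (simp only:) (simp add: field_simps del: T.simps)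
  next
    case 4 then show ?thesis by (simp add: w_def qbinom_gt)
  next
    case 5 then show ?thesis by (simp add: w_def qbinom_gt)
  qed
qed

lemma W_far1: "b > Suc a \<Longrightarrow> W q a b = 0" by (simp add: W_def w_def qbinom_gt)
lemma W_far2: "a > Suc b \<Longrightarrow> W q a b = 0" by (simp add: W_def w_def qbinom_gt)

lemma W_level: "W q a a = (poly (qint (Suc a)) q)^2"
  by (simp add: W_def w_def qbinom_Suc_self power2_eq_square)

lemma W_up: "W q a (Suc a) = q^(Suc a) * poly (T (Suc a)) q"
proof -
  have x: "int (Suc a) * (int (Suc a) - int a) = int (Suc a)" by simp
  have e: "q powi (int (Suc a) * (int (Suc a) - int a)) = q^(Suc a)"
    by (subst x) (rule power_int_of_nat)
  show ?thesis unfolding W_def e by (simp add: w_def qbinom_self qbinom_SS del: T.simps)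
qed

lemma W_down: "q \<noteq> 0 \<Longrightarrow> W q (Suc a) a = inverse (q^a) * poly (T (Suc a)) q"
proof -
  assume q: "q \<noteq> 0"
  have x: "int a * (int a - int (Suc a)) = - int a" by simp
  have e: "q powi (int a * (int a - int (Suc a))) = inverse (q^a)"
    by (subst x) (rule powi_neg_nat[OF q])
  show ?thesis unfolding W_def e by (simp add: w_def qbinom_self qbinom_SS del: T.simps)
qed

lemma W_loop: "q \<noteq> 0 \<Longrightarrow> W q (Suc l) l * W q l (Suc l) = q * (poly (T (Suc l)) q)^2"
  by (simp add: W_down W_up power2_eq_square field_simps)

lemma cfc_odd: "cfc (Suc (2*l)) q = poly (T (Suc l)) q"
proof -
  have "(Suc (2*l) + 1) div 2 + 1 = Suc (Suc l)" by simp
  then show ?thesis by (simp add: cfc_def qbinom_SS2)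
qed

lemma cfc_even2: "cfc (Suc (Suc (2*l))) q = q * poly (T (Suc l)) q"
proof -
  have "Suc (Suc (2*l)) div 2 + 1 = Suc (Suc l)" by simp
  then show ?thesis by (simp add: cfc_def qbinom_SS2)
qed

lemma cfc_even: "cfc (2*l) q = q * poly (T l) q"
proof (cases l)
  case 0 then show ?thesis by (simp add: cfc_def qbinom_gt)
next
  case (Suc l') then show ?thesis using cfc_even2[of l' q] by simp
qed

lemma cfc_0: "cfc 0 q = 0" using cfc_even[of 0 q] by simp

lemma W_level_cfc: "W q l l = cfc (2*l) q + cfc (Suc (2*l)) q"
proof -
  have t: "poly (T (Suc l)) q = poly (T l) q + q^l * poly (qint (Suc l)) q"
    by (simp add: poly_monom)
  have p: "poly (T l) q * (1 + q) = poly (qint l) q * poly (qint (Suc l)) q" by (rule poly_T_prod)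
  have i: "poly (qint (Suc l)) q = poly (qint l) q + q^l" by (simp add: qint_Suc poly_monom)
  have "cfc (2*l) q + cfc (Suc (2*l)) q = poly (T l) q * (1 + q) + q^l * poly (qint (Suc l)) q"
    unfolding cfc_even cfc_odd t by (simp add: algebra_simps)
  also have "\<dots> = (poly (qint l) q + q^l) * poly (qint (Suc l)) q" unfolding p
    by (simp add: algebra_simps)
  also have "\<dots> = (poly (qint (Suc l)) q)^2" unfolding i[symmetric] by (simp add: power2_eq_square)
  finally show ?thesis by (simp add: W_level)
qed

lemma W_loop_cfc: "q \<noteq> 0 \<Longrightarrow> W q (Suc l) l * W q l (Suc l) = cfc (Suc (2*l)) q * cfc (Suc (Suc (2*l))) q"
  by (simp add: W_loop cfc_odd cfc_even2 power2_eq_square)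



lemma sum_shift1: "g 0 = (0::'a::comm_monoid_add) \<Longrightarrow> sum g {1..(n::nat)-1} = sum g {..<n}"
proof (cases n)
  case (Suc m)
  assume g: "g 0 = 0"
  have "sum g {1..n-1} = (\<Sum>k<m. g (Suc k))" using Suc by (simp add: sum.atLeast1_atMost_eq prod.atLeast1_atMost_eq)
  also have "\<dots> = sum g {..<n}" using Suc g by (simp add: sum.lessThan_Suc_shift del: sum.lessThan_Suc)
  finally show ?thesis .
qed simp

lemma prod_powi: "(q::complex) \<noteq> 0 \<Longrightarrow> (\<Prod>k\<in>A. q powi g k) = q powi (\<Sum>k\<in>A. g k)"
proof (induction A rule: infinite_finite_induct)
  case (insert x F)
  then show ?case by (simp add: power_int_add)
qed simp_all

lemma expo:
  assumes "f 0 = 0"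
  shows "(\<Sum>k<n. int k) - (\<Sum>k<n. (int k - int (f k)) * (1 - int (f k) + int (f (Suc k))))
     - (\<Sum>k<n. dd (f k) (f (Suc k))) - (\<Sum>k<n. int (f (Suc k)) * (int (f (Suc k)) - int (f k)))
     = - int n * int (f n)"
proof (induction n)
  case 0 then show ?case using assms by simp
next
  case (Suc n)
  then show ?case unfolding dd_def by (simp add: algebra_simps)
qed

lemma prod_w_split:
  assumes f0: "f 0 = 0" and fn: "f n = 0"
  shows "(\<Prod>k=1..n-1. poly (qbinom (1 + f (k-1)) (f k)) x) * (\<Prod>k=1..n-1. poly (qbinom (1 + f (k+1)) (f k)) x)
     = (\<Prod>k<n. w x (f k) (f (Suc k)))"
proof (cases n)
  case 0 then show ?thesis by simp
next
  case (Suc m)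
  have A: "(\<Prod>k=1..n-1. poly (qbinom (1 + f (k-1)) (f k)) x) = (\<Prod>k<n. poly (qbinom (1 + f k) (f (Suc k))) x)"
  proof -
    have "(\<Prod>k=1..n-1. poly (qbinom (1 + f (k-1)) (f k)) x) = (\<Prod>k<m. poly (qbinom (1 + f k) (f (Suc k))) x)"
      using Suc by (simp add: sum.atLeast1_atMost_eq prod.atLeast1_atMost_eq)
    also have "\<dots> = (\<Prod>k<n. poly (qbinom (1 + f k) (f (Suc k))) x)"
      using Suc fn by (simp add: qbinom_0)
    finally show ?thesis .
  qed
  have B: "(\<Prod>k=1..n-1. poly (qbinom (1 + f (k+1)) (f k)) x) = (\<Prod>k<n. poly (qbinom (1 + f (Suc k)) (f k)) x)"
  proof -
    have "(\<Prod>k=1..n-1. poly (qbinom (1 + f (k+1)) (f k)) x) = (\<Prod>k<m. poly (qbinom (1 + f (Suc (Suc k))) (f (Suc k))) x)"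
      using Suc by (simp add: sum.atLeast1_atMost_eq prod.atLeast1_atMost_eq)
    also have "\<dots> = (\<Prod>k<n. poly (qbinom (1 + f (Suc k)) (f k)) x)"
      using Suc f0 by (simp add: qbinom_0 prod.lessThan_Suc_shift del: prod.lessThan_Suc)
    finally show ?thesis .
  qed
  show ?thesis unfolding A B w_def by (simp add: prod.distrib)
qed

lemma term_eq:
  assumes q: "q \<noteq> 0" and f0: "f 0 = 0" and fn: "f n = 0"
  shows "q^(n*(n-1) div 2) * (inverse q powi (\<Sum>k=1..n-1. (int k - int (f k)) * (1 - int (f k) + int (f (k+1))))
      * (\<Prod>k=1..n-1. poly (qbinom (1 + f (k-1)) (f k)) (inverse q))
      * (\<Prod>k=1..n-1. poly (qbinom (1 + f (k+1)) (f k)) (inverse q)))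
    = (\<Prod>k<n. W q (f k) (f (Suc k)))"
proof -
  define S where "S = (\<Sum>k<n. int k)"
  define E where "E = (\<Sum>k<n. (int k - int (f k)) * (1 - int (f k) + int (f (Suc k))))"
  define D where "D = (\<Sum>k<n. dd (f k) (f (Suc k)))"
  define P where "P = (\<Sum>k<n. int (f (Suc k)) * (int (f (Suc k)) - int (f k)))"
  have ex: "S - E - D - P = 0" using expo[of f n, OF f0] fn by (simp add: S_def E_def D_def P_def)
  have e4: "(\<Sum>k=1..n-1. (int k - int (f k)) * (1 - int (f k) + int (f (k+1)))) = E"
    unfolding E_def by (subst sum_shift1) (simp_all add: f0)
  have e5: "q^(n*(n-1) div 2) = q powi S"
  proof -
    have "n*(n-1) div 2 = \<Sum>{0..<n}" by (simp add: Sum_Ico_nat)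
    then have "int (n*(n-1) div 2) = S" unfolding S_def by (simp add: atLeast0LessThan)
    then show ?thesis by (metis power_int_of_nat)
  qed
  have e3: "inverse q powi E = q powi (- E)" by (simp add: power_int_inverse power_int_minus)
  have e2: "(\<Prod>k<n. w (inverse q) (f k) (f (Suc k))) = q powi (- D) * (\<Prod>k<n. w q (f k) (f (Suc k)))"
    unfolding D_def using q by (simp add: w_recip prod.distrib prod_powi sum_negf)
  have e6: "(\<Prod>k<n. W q (f k) (f (Suc k))) = q powi P * (\<Prod>k<n. w q (f k) (f (Suc k)))"
    unfolding P_def W_def using q by (simp add: prod.distrib prod_powi)
  have "S + (-E + -D) = P" using ex by simp
  moreover have "q powi (S + (-E + -D)) = q powi S * (q powi (-E) * q powi (-D))"
    by (simp only: power_int_add[OF disjI1[OF q]])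
  ultimately have "q powi S * (q powi (-E) * q powi (-D)) = q powi P" by simp
  then show ?thesis
    unfolding e4 e5 e3 mult.assoc prod_w_split[OF f0 fn] e2 e6
    by (simp add: mult.assoc[symmetric])
qed

lemma htilde_W:
  assumes q: "q \<noteq> 0"
  shows "htilde n q = (\<Sum>f\<in>fset n. \<Prod>k<n. W q (f k) (f (Suc k)))"
proof -
  have "htilde n q = (\<Sum>f\<in>fset n. q^(n*(n-1) div 2) * (inverse q powi (\<Sum>k=1..n-1. (int k - int (f k)) * (1 - int (f k) + int (f (k+1))))
      * (\<Prod>k=1..n-1. poly (qbinom (1 + f (k-1)) (f k)) (inverse q))
      * (\<Prod>k=1..n-1. poly (qbinom (1 + f (k+1)) (f k)) (inverse q))))"
    unfolding htilde_def h_def by (simp add: sum_distrib_left)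
  also have "\<dots> = (\<Sum>f\<in>fset n. \<Prod>k<n. W q (f k) (f (Suc k)))"
  proof (rule sum.cong)
    fix f assume "f \<in> fset n"
    then have f0: "f 0 = 0" and fn: "f n = 0" unfolding fset_def by (cases n; auto)+
    show "q^(n*(n-1) div 2) * (inverse q powi (\<Sum>k=1..n-1. (int k - int (f k)) * (1 - int (f k) + int (f (k+1))))
      * (\<Prod>k=1..n-1. poly (qbinom (1 + f (k-1)) (f k)) (inverse q))
      * (\<Prod>k=1..n-1. poly (qbinom (1 + f (k+1)) (f k)) (inverse q))) = (\<Prod>k<n. W q (f k) (f (Suc k)))"
      by (rule term_eq[OF q f0 fn])
  qed simp
  finally show ?thesis .
qed



fun P :: "complex \<Rightarrow> nat \<Rightarrow> nat \<Rightarrow> nat \<Rightarrow> complex" where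
  "P q l 0 b = (if b = l then 1 else 0)"
| "P q l (Suc n) b = (if b < l then 0 else
      (if b > 0 then P q l n (b-1) * W q (b-1) b else 0) + P q l n b * W q b b + P q l n (Suc b) * W q (Suc b) b)"

lemma P_below: "b < l \<Longrightarrow> P q l n b = 0"
  by (cases n) auto

lemma P_above: "b > l + n \<Longrightarrow> P q l n b = 0"
proof (induction n arbitrary: b)
  case 0 then show ?case by simp
next
  case (Suc n)
  then show ?case by simp
qed

definition Aset :: "nat \<Rightarrow> nat \<Rightarrow> (nat \<Rightarrow> nat) set" where
  "Aset n m = {f. f 0 = 0 \<and> (\<forall>k>n. f k = 0) \<and> (\<forall>k. f k \<le> m)}"

lemma Aset_0: "Aset 0 m = {\<lambda>_. 0}"
  unfolding Aset_def by (auto simp: fun_eq_iff) (metis neq0_conv)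

lemma Aset_Suc_img: "{f \<in> Aset (Suc n) m. f (Suc n) = b} = (\<lambda>g. g(Suc n := b)) ` Aset n m" if "b \<le> m"
proof
  show "{f \<in> Aset (Suc n) m. f (Suc n) = b} \<subseteq> (\<lambda>g. g(Suc n := b)) ` Aset n m"
  proof
    fix f assume f: "f \<in> {f \<in> Aset (Suc n) m. f (Suc n) = b}"
    then have "f = (f(Suc n := 0))(Suc n := b)" by auto
    moreover have "f(Suc n := 0) \<in> Aset n m" using f unfolding Aset_def by auto
    ultimately show "f \<in> (\<lambda>g. g(Suc n := b)) ` Aset n m" by blast
  qed
next
  show "(\<lambda>g. g(Suc n := b)) ` Aset n m \<subseteq> {f \<in> Aset (Suc n) m. f (Suc n) = b}"
    using that unfolding Aset_def by auto
qed

lemma Aset_Suc_sub: "Aset (Suc n) m \<subseteq> (\<lambda>(g,b). g(Suc n := b)) ` (Aset n m \<times> {..m})"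
proof
  fix f assume f: "f \<in> Aset (Suc n) m"
  then have "f = (f(Suc n := 0))(Suc n := f (Suc n))" by auto
  moreover have "(f(Suc n := 0), f (Suc n)) \<in> Aset n m \<times> {..m}" using f unfolding Aset_def by auto
  ultimately show "f \<in> (\<lambda>(g,b). g(Suc n := b)) ` (Aset n m \<times> {..m})"
    by (metis (no_types, lifting) case_prod_conv image_eqI)
qed

lemma finite_Aset: "finite (Aset n m)"
proof (induction n)
  case 0 then show ?case by (simp add: Aset_0)
next
  case (Suc n)
  show ?case by (rule finite_subset[OF Aset_Suc_sub]) (simp add: Suc.IH)
qed

definition Q :: "complex \<Rightarrow> nat \<Rightarrow> nat \<Rightarrow> nat \<Rightarrow> complex" where
  "Q q m n b = (\<Sum>f\<in>{f \<in> Aset n m. f n = b}. \<Prod>k<n. W q (f k) (f (Suc k)))"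

lemma Q_Suc:
  assumes "b \<le> m"
  shows "Q q m (Suc n) b = (\<Sum>a\<le>m. Q q m n a * W q a b)"
proof -
  have inj: "inj_on (\<lambda>g. g(Suc n := b)) (Aset n m)"
  proof (rule inj_onI)
    fix g g' assume "g \<in> Aset n m" "g' \<in> Aset n m" "g(Suc n := b) = g'(Suc n := b)"
    then show "g = g'" unfolding Aset_def by (auto simp: fun_eq_iff) (metis lessI)
  qed
  have "Q q m (Suc n) b = (\<Sum>g\<in>Aset n m. \<Prod>k<Suc n. W q ((g(Suc n := b)) k) ((g(Suc n := b)) (Suc k)))"
    unfolding Q_def Aset_Suc_img[OF assms] by (simp add: sum.reindex[OF inj])
  also have "\<dots> = (\<Sum>g\<in>Aset n m. (\<Prod>k<n. W q (g k) (g (Suc k))) * W q (g n) b)"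
  proof (rule sum.cong)
    fix g assume "g \<in> Aset n m"
    have "(\<Prod>k<n. W q ((g(Suc n := b)) k) ((g(Suc n := b)) (Suc k))) = (\<Prod>k<n. W q (g k) (g (Suc k)))"
      by (rule prod.cong) auto
    then show "(\<Prod>k<Suc n. W q ((g(Suc n := b)) k) ((g(Suc n := b)) (Suc k))) = (\<Prod>k<n. W q (g k) (g (Suc k))) * W q (g n) b"
      by simp
  qed simp
  also have "\<dots> = (\<Sum>a\<le>m. \<Sum>g\<in>{g. g \<in> Aset n m \<and> g n = a}. (\<Prod>k<n. W q (g k) (g (Suc k))) * W q (g n) b)"
    apply (rule sum.group[symmetric])
      apply (rule finite_Aset)
     apply simp
    apply (auto simp: Aset_def)
    done
  also have "\<dots> = (\<Sum>a\<le>m. Q q m n a * W q a b)"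
    unfolding Q_def by (rule sum.cong) (auto simp: sum_distrib_right)
  finally show ?thesis .
qed

lemma sum_three:
  assumes "l + n < m" "b \<le> m"
  shows "(\<Sum>a\<le>m. P q l n a * W q a b) =
    (if b > 0 then P q l n (b-1) * W q (b-1) b else 0) + P q l n b * W q b b + P q l n (Suc b) * W q (Suc b) b"
proof -
  define g where "g a = P q l n a * W q a b" for a
  have "(\<Sum>a\<le>Suc m. g a) = (\<Sum>a\<le>m. g a) + g (Suc m)" by simp
  moreover have "g (Suc m) = 0" using assms by (simp add: g_def P_above)
  ultimately have 1: "(\<Sum>a\<le>m. g a) = (\<Sum>a\<le>Suc m. g a)" by simp
  define S where "S = (if b = 0 then {b, Suc b} else {b-1, b, Suc b})"
  have 2: "(\<Sum>a\<le>Suc m. g a) = (\<Sum>a\<in>S. g a)"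
  proof (rule sum.mono_neutral_right)
    show "S \<subseteq> {..Suc m}" using assms by (auto simp: S_def)
    show "\<forall>a\<in>{..Suc m} - S. g a = 0"
    proof
      fix a assume "a \<in> {..Suc m} - S"
      then have "a > Suc b \<or> b > Suc a" by (auto simp: S_def split: if_splits)
      then show "g a = 0" by (auto simp: g_def W_far1 W_far2)
    qed
  qed simp
  have 3: "(\<Sum>a\<in>S. g a) = (if b > 0 then g (b-1) else 0) + g b + g (Suc b)"
    by (cases b) (auto simp: S_def)
  have "(\<Sum>a\<le>m. g a) = (if b > 0 then g (b-1) else 0) + g b + g (Suc b)" using 1 2 3 by simp
  then show ?thesis unfolding g_def .
qed

lemma Q_eq_P: "n \<le> m \<Longrightarrow> b \<le> m \<Longrightarrow> Q q m n b = P q 0 n b"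
proof (induction n arbitrary: b)
  case 0
  have "{f \<in> Aset 0 m. f 0 = b} = (if b = 0 then {\<lambda>_. 0} else {})" by (auto simp: Aset_0)
  then show ?case by (simp add: Q_def)
next
  case (Suc n)
  have "Q q m (Suc n) b = (\<Sum>a\<le>m. Q q m n a * W q a b)" by (rule Q_Suc[OF Suc.prems(2)])
  also have "\<dots> = (\<Sum>a\<le>m. P q 0 n a * W q a b)"
    by (rule sum.cong) (use Suc in auto)
  also have "\<dots> = P q 0 (Suc n) b"
    using sum_three[of 0 n m b q] Suc.prems by simp
  finally show ?case .
qed

lemma fset_Aset: "fset n = {f \<in> Aset n n. f n = 0}"
  unfolding fset_def Aset_def by (cases n) (auto, (metis Suc_lessI not_less0 neq0_conv)+)

lemma htilde_P: "q \<noteq> 0 \<Longrightarrow> htilde n q = P q 0 n 0"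
  using htilde_W[of q n] Q_eq_P[of n n 0 q] by (simp add: Q_def fset_Aset)



lemma P_Suc_above: "l \<le> a \<Longrightarrow> 0 < a \<Longrightarrow>
  P q l (Suc i) a = P q l i (a-1) * W q (a-1) a + P q l i a * W q a a + P q l i (Suc a) * W q (Suc a) a"
  by simp

lemma last_return:
  "l < a \<Longrightarrow> P q l (Suc n) a = (\<Sum>j\<le>n. P q l j l * W q l (Suc l) * P q (Suc l) (n-j) a)"
proof (induction n arbitrary: a)
  case 0
  then show ?case by (cases "a = Suc l") auto
next
  case (Suc n)
  note a = Suc.prems
  define Wu where "Wu = W q l (Suc l)"
  define R where "R i b = P q (Suc l) i b" for i b
  define M where "M j = P q l j l" for j
  have IHa: "P q l (Suc n) a = (\<Sum>j\<le>n. M j * Wu * R (n-j) a)"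
    using Suc.IH[OF a] by (simp add: M_def Wu_def R_def)
  have IHb: "P q l (Suc n) (Suc a) = (\<Sum>j\<le>n. M j * Wu * R (n-j) (Suc a))"
    using Suc.IH[of "Suc a"] a by (simp add: M_def Wu_def R_def)
  have RS: "R (Suc i) a = R i (a-1) * W q (a-1) a + R i a * W q a a + R i (Suc a) * W q (Suc a) a" for i
    unfolding R_def using a by (intro P_Suc_above) auto
  have "(\<Sum>j\<le>Suc n. M j * Wu * R (Suc n - j) a) = (\<Sum>j\<le>n. M j * Wu * R (Suc (n - j)) a) + M (Suc n) * Wu * R 0 a"
    by (simp add: Suc_diff_le)
  also have "(\<Sum>j\<le>n. M j * Wu * R (Suc (n - j)) a) =
      (\<Sum>j\<le>n. M j * Wu * R (n-j) (a-1)) * W q (a-1) a + P q l (Suc n) a * W q a a + P q l (Suc n) (Suc a) * W q (Suc a) a"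
    unfolding RS IHa IHb by (simp add: sum.distrib sum_distrib_left sum_distrib_right distrib_left mult_ac)
  finally have rhs: "(\<Sum>j\<le>Suc n. M j * Wu * R (Suc n - j) a) =
      (\<Sum>j\<le>n. M j * Wu * R (n-j) (a-1)) * W q (a-1) a + M (Suc n) * Wu * R 0 a
      + P q l (Suc n) a * W q a a + P q l (Suc n) (Suc a) * W q (Suc a) a" by simp
  have lhs: "P q l (Suc (Suc n)) a = P q l (Suc n) (a-1) * W q (a-1) a + P q l (Suc n) a * W q a a + P q l (Suc n) (Suc a) * W q (Suc a) a"
    using a by (intro P_Suc_above) auto
  have key: "(\<Sum>j\<le>n. M j * Wu * R (n-j) (a-1)) * W q (a-1) a + M (Suc n) * Wu * R 0 a
      = P q l (Suc n) (a-1) * W q (a-1) a"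
  proof (cases "a = Suc l")
    case True
    have "R i (a-1) = 0" for i using True by (simp add: R_def P_below)
    then show ?thesis using True by (simp add: M_def Wu_def R_def)
  next
    case False
    then have "l < a - 1" using a by simp
    from Suc.IH[OF this] have "P q l (Suc n) (a-1) = (\<Sum>j\<le>n. M j * Wu * R (n-j) (a-1))"
      by (simp add: M_def Wu_def R_def)
    moreover have "R 0 a = 0" using False by (simp add: R_def)
    ultimately show ?thesis by simp
  qed
  show ?case using lhs rhs key by (simp add: M_def Wu_def R_def)
qed

definition Mf :: "complex \<Rightarrow> nat \<Rightarrow> complex fps" where
  "Mf q l = Abs_fps (\<lambda>n. P q l n l)"

lemma P_diag_Suc: "P q l (Suc n) l = P q l n l * W q l l + P q l n (Suc l) * W q (Suc l) l"
  by (simp add: P_below)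

lemma Mf_rec:
  "Mf q l = 1 + fps_const (W q l l) * (fps_X * Mf q l)
     + fps_const (W q (Suc l) l * W q l (Suc l)) * (fps_X^2 * (Mf q l * Mf q (Suc l)))"
proof (rule fps_ext)
  fix n
  show "Mf q l $ n = (1 + fps_const (W q l l) * (fps_X * Mf q l)
     + fps_const (W q (Suc l) l * W q l (Suc l)) * (fps_X^2 * (Mf q l * Mf q (Suc l)))) $ n"
  proof (cases n)
    case 0 then show ?thesis by (simp add: Mf_def fps_X_power_mult_nth)
  next
    case (Suc n')
    show ?thesis
    proof (cases n')
      case 0 then show ?thesis using Suc by (simp add: Mf_def fps_X_power_mult_nth P_diag_Suc del: P.simps(2))
    next
      case (Suc m)
      have "P q l n' (Suc l) = (\<Sum>j\<le>m. P q l j l * W q l (Suc l) * P q (Suc l) (m-j) (Suc l))"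
        using Suc last_return[of l "Suc l" q m] by simp
      also have "\<dots> = W q l (Suc l) * (Mf q l * Mf q (Suc l)) $ m"
        by (simp add: Mf_def fps_mult_nth atLeast0AtMost sum_distrib_left algebra_simps)
      finally have "P q l n' (Suc l) = W q l (Suc l) * (Mf q l * Mf q (Suc l)) $ m" .
      then show ?thesis using \<open>n = Suc n'\<close> Suc
        by (simp add: fps_X_power_mult_nth P_diag_Suc del: P.simps(2)) (simp add: Mf_def algebra_simps)
    qed
  qed
qed



fun Acf :: "complex \<Rightarrow> nat \<Rightarrow> nat \<Rightarrow> complex" where
  "Acf q k 0 = 1"
| "Acf q k (Suc n) = cfc k q * (\<Sum>j\<le>n. Acf q (Suc k) j * Acf q k (n - j))"

definition Ff :: "complex \<Rightarrow> nat \<Rightarrow> complex fps" where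
  "Ff q k = Abs_fps (Acf q k)"

lemma Ff_nth: "Ff q k $ n = Acf q k n" by (simp add: Ff_def)

lemma Ff_rec: "Ff q k = 1 + fps_const (cfc k q) * (fps_X * (Ff q (Suc k) * Ff q k))"
proof (rule fps_ext)
  fix n
  have h: "(Ff q (Suc k) * Ff q k) $ m = (\<Sum>j\<le>m. Acf q (Suc k) j * Acf q k (m - j))" for m
    by (simp add: Ff_def fps_mult_nth atLeast0AtMost)
  show "Ff q k $ n = (1 + fps_const (cfc k q) * (fps_X * (Ff q (Suc k) * Ff q k))) $ n"
    by (cases n) (simp_all add: Ff_nth h del: fps_mult_nth)
qed

lemma Ff_0: "Ff q 0 = 1"
  using Ff_rec[of q 0] by (simp add: cfc_0)

lemma contr:
  fixes F0 F1 F2 F3 X a b c :: "'a::comm_ring_1"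
  assumes "F0 = 1 + a*(X*(F1*F0))" "F1 = 1 + b*(X*(F2*F1))" "F2 = 1 + c*(X*(F3*F2))"
  shows "F0*F1 = 1 + (a+b)*(X*(F0*F1)) + (b*c)*(X^2*((F0*F1)*(F2*F3)))"
proof -
  have "F0*F1 - (1 + (a+b)*(X*(F0*F1)) + (b*c)*(X^2*((F0*F1)*(F2*F3))))
    = (F0 - (1 + a*(X*(F1*F0)))) + F0*(F1 - (1 + b*(X*(F2*F1)))) + b*X*F0*F1*(F2 - (1 + c*(X*(F3*F2))))"
    by (simp add: algebra_simps power2_eq_square)
  also have "\<dots> = 0" using assms by simp
  finally show ?thesis by simp
qed

definition Tf :: "complex \<Rightarrow> nat \<Rightarrow> complex fps" where
  "Tf q l = Ff q (2*l) * Ff q (Suc (2*l))"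

lemma Tf_rec:
  "Tf q l = 1 + fps_const (cfc (2*l) q + cfc (Suc (2*l)) q) * (fps_X * Tf q l)
     + fps_const (cfc (Suc (2*l)) q * cfc (Suc (Suc (2*l))) q) * (fps_X^2 * (Tf q l * Tf q (Suc l)))"
  using contr[OF Ff_rec Ff_rec Ff_rec, of q "2*l"] by (simp add: Tf_def)

lemma uniq:
  fixes Dl :: "nat \<Rightarrow> complex fps"
  assumes "\<And>l. Dl l = fps_const (L l) * (fps_X * Dl l) + fps_const (K l) * (fps_X^2 * (Dl l * A l + B l * Dl (Suc l)))"
  shows "Dl l $ n = 0"
proof (induction n arbitrary: l rule: less_induct)
  case (less n)
  have z1: "(Dl l * A l) $ m = 0" if "m < n" for m
    unfolding fps_mult_nth by (rule sum.neutral) (use that less in auto)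
  have z2: "(B l * Dl (Suc l)) $ m = 0" if "m < n" for m
    unfolding fps_mult_nth by (rule sum.neutral) (use that less in auto)
  have "Dl l $ n = (fps_const (L l) * (fps_X * Dl l) + fps_const (K l) * (fps_X^2 * (Dl l * A l + B l * Dl (Suc l)))) $ n"
    using assms by metis
  also have "\<dots> = 0"
    using less z1 z2 by (simp add: fps_X_power_mult_nth)
  finally show ?case .
qed

lemma Mf_Tf: "q \<noteq> 0 \<Longrightarrow> Mf q l = Tf q l"
proof -
  assume q: "q \<noteq> 0"
  define Dl where "Dl l = Tf q l - Mf q l" for l
  define L where "L l = W q l l" for l
  define K where "K l = W q (Suc l) l * W q l (Suc l)" for l
  have M: "Mf q l = 1 + fps_const (L l) * (fps_X * Mf q l) + fps_const (K l) * (fps_X^2 * (Mf q l * Mf q (Suc l)))" for l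
    unfolding L_def K_def by (rule Mf_rec)
  have T: "Tf q l = 1 + fps_const (L l) * (fps_X * Tf q l) + fps_const (K l) * (fps_X^2 * (Tf q l * Tf q (Suc l)))" for l
    unfolding L_def K_def W_level_cfc W_loop_cfc[OF q] by (rule Tf_rec)
  have "Dl l = fps_const (L l) * (fps_X * Dl l) + fps_const (K l) * (fps_X^2 * (Dl l * Tf q (Suc l) + Mf q l * Dl (Suc l)))" for l
  proof -
    have "Dl l = Tf q l - Mf q l" by (simp add: Dl_def)
    also have "\<dots> = fps_const (L l) * (fps_X * Tf q l) + fps_const (K l) * (fps_X^2 * (Tf q l * Tf q (Suc l)))
       - (fps_const (L l) * (fps_X * Mf q l) + fps_const (K l) * (fps_X^2 * (Mf q l * Mf q (Suc l))))"
      by (subst T, subst M) simp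
    also have "\<dots> = fps_const (L l) * (fps_X * Dl l) + fps_const (K l) * (fps_X^2 * (Dl l * Tf q (Suc l) + Mf q l * Dl (Suc l)))"
      by (simp add: Dl_def algebra_simps)
    finally show ?thesis .
  qed
  then have "Dl l $ n = 0" for n by (rule uniq)
  then show ?thesis by (simp add: Dl_def fps_eq_iff)
qed

lemma P_Acf: "q \<noteq> 0 \<Longrightarrow> P q 0 n 0 = Acf q 1 n"
proof -
  assume q: "q \<noteq> 0"
  have "Mf q 0 = Ff q 1" using Mf_Tf[OF q, of 0] by (simp add: Tf_def Ff_0)
  then have "Mf q 0 $ n = Ff q 1 $ n" by simp
  then show ?thesis by (simp add: Mf_def Ff_def)
qed

lemma Ff_inv: "Ff q k = inverse (1 - fps_const (cfc k q) * fps_X * Ff q (Suc k))"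
proof -
  have "(1 - fps_const (cfc k q) * fps_X * Ff q (Suc k)) * Ff q k = 1"
  proof -
    have "(1 - fps_const (cfc k q) * fps_X * Ff q (Suc k)) * Ff q k
        = Ff q k - fps_const (cfc k q) * (fps_X * (Ff q (Suc k) * Ff q k))" by (simp add: algebra_simps)
    also have "\<dots> = 1" by (subst (1) Ff_rec) simp
    finally show ?thesis .
  qed
  then show ?thesis by (rule fps_inverse_unique[symmetric])
qed

lemma prefix_zero_mult:
  fixes a u :: "complex fps"
  assumes "\<forall>j\<le>n. a $ j = 0" "i \<le> n"
  shows "(u * a) $ i = 0" "(a * u) $ i = 0"
  unfolding fps_mult_nth using assms by (auto intro!: sum.neutral)

lemma inv_agree:
  fixes f g :: "complex fps"
  assumes f0: "f $ 0 \<noteq> 0" and g0: "g $ 0 \<noteq> 0" and ag: "\<forall>i\<le>n. f $ i = g $ i" and i: "i \<le> n"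
  shows "inverse f $ i = inverse g $ i"
proof -
  have "inverse f * (g - f) * inverse g = inverse f * (g * inverse g) - (inverse f * f) * inverse g"
    by (simp add: algebra_simps)
  also have "\<dots> = inverse f - inverse g"
    using inverse_mult_eq_1[OF f0] inverse_mult_eq_1'[OF g0] by simp
  finally have e: "inverse f - inverse g = inverse f * (g - f) * inverse g" by simp
  have z: "\<forall>j\<le>n. (g - f) $ j = 0" using ag by simp
  have "\<forall>j\<le>n. (inverse f * (g - f)) $ j = 0" using prefix_zero_mult(1)[OF z] by blast
  then have "(inverse f * (g - f) * inverse g) $ i = 0" using prefix_zero_mult(2) i by blast
  then have "(inverse f - inverse g) $ i = 0" by (simp only: e)
  then show ?thesis by simp
qed

lemma cf_agree: "\<forall>k. \<forall>i\<le>N. cf q k N $ i = Acf q k i"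
proof (induction N)
  case 0 then show ?case by simp
next
  case (Suc N)
  show ?case
  proof (intro allI impI)
    fix k i assume i: "i \<le> Suc N"
    define c where "c = fps_const (cfc k q)"
    have ag: "\<forall>j\<le>Suc N. (1 - c * fps_X * cf q (Suc k) N) $ j = (1 - c * fps_X * Ff q (Suc k)) $ j"
    proof (intro allI impI)
      fix j assume j: "j \<le> Suc N"
      have "(cf q (Suc k) N) $ (j - 1) = Ff q (Suc k) $ (j - 1)" if "j > 0"
        using Suc.IH j that by (simp add: Ff_def)
      then show "(1 - c * fps_X * cf q (Suc k) N) $ j = (1 - c * fps_X * Ff q (Suc k)) $ j"
        by (simp add: c_def mult.assoc)
    qed
    have "cf q k (Suc N) $ i = inverse (1 - c * fps_X * cf q (Suc k) N) $ i" by (simp add: c_def)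
    also have "\<dots> = inverse (1 - c * fps_X * Ff q (Suc k)) $ i"
      by (rule inv_agree[OF _ _ ag i]) (simp_all add: c_def mult.assoc)
    also have "\<dots> = Ff q k $ i" by (simp add: c_def Ff_inv[symmetric])
    finally show "cf q k (Suc N) $ i = Acf q k i" by (simp add: Ff_def)
  qed
qed

theorem mainTheorem3:
  fixes q :: complex
  assumes "q \<noteq> 0"
  shows "(\<lambda>N. cf q 1 N) \<longlonglongrightarrow> Abs_fps (\<lambda>n. htilde n q)"
proof (rule tendsto_fpsI)
  fix n
  show "eventually (\<lambda>N. cf q 1 N $ n = Abs_fps (\<lambda>n. htilde n q) $ n) sequentially"
  proof (rule eventually_sequentiallyI[of n])
    fix N assume "n \<le> N"
    then have "cf q 1 N $ n = Acf q 1 n" using cf_agree by blast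
    also have "\<dots> = htilde n q" using htilde_P[OF assms] P_Acf[OF assms] by simp
    finally show "cf q 1 N $ n = Abs_fps (\<lambda>n. htilde n q) $ n" by simp
  qed
qed

end
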